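(* The algebra $\mathcal{A}$ (under pointwise operations) of real-valued continuous functions on $[0,1]$ which are analytic on $(0,1)$ admits a set of free generators of cardinality $\mathfrak{c}$, i.e. there is $Z=\{z_\alpha:\alpha<\mathfrak{c}\}\subset\mathcal{A}$ such that for every polynomial $P$ with real coefficients and no constant term and distinct $z_{\alpha_1},\dots,z_{\alpha_n}\in Z$, $P(z_{\alpha_1},\dots,z_{\alpha_n})=0$ iff $P=0$.
   Context: $\mathfrak{c}$ is the cardinality of the continuum. *)

theory Defs
  imports "HOL-Analysis.Analysis" "HOL-Library.Equipollence"
begin

definition real_analytic_on :: "(real \<Rightarrow> real) \<Rightarrow> real set \<Rightarrow> bool" where
  "real_analytic_on f S \<longleftrightarrow>
     (\<forall>x\<in>S. \<exists>r>0. \<exists>a::nat \<Rightarrow> real.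
        \<forall>y\<in>S. \<bar>y - x\<bar> < r \<longrightarrow> (\<lambda>n. a n * (y - x) ^ n) sums f y)"

text \<open>The algebra A: continuous functions on [0,1], analytic on (0,1).
  Functions on [0,1] are represented canonically by extending them by 0.\<close>
definition algA :: "(real \<Rightarrow> real) set" where
  "algA = {f. continuous_on {0..1} f \<and> real_analytic_on f {0<..<1} \<and>
              (\<forall>x. x \<notin> {0..1} \<longrightarrow> f x = 0)}"

text \<open>A real polynomial in n variables is a finitely supported coefficient
  function c on exponent vectors e :: nat \<Rightarrow> nat (with e i = 0 for i \<ge> n).\<close>
definition poly_eval :: "((nat \<Rightarrow> nat) \<Rightarrow> real) \<Rightarrow> (real \<Rightarrow> real) list \<Rightarrow> real \<Rightarrow> real" where
  "poly_eval c zs x = (\<Sum>e\<in>{e. c e \<noteq> 0}. c e * (\<Prod>i<length zs. (zs ! i) x ^ e i))"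

definition is_poly_in :: "nat \<Rightarrow> ((nat \<Rightarrow> nat) \<Rightarrow> real) \<Rightarrow> bool" where
  "is_poly_in n c \<longleftrightarrow> finite {e. c e \<noteq> 0} \<and> (\<forall>e. c e \<noteq> 0 \<longrightarrow> (\<forall>i\<ge>n. e i = 0))"

end

theory Submission
  imports Defs "HOL-Computational_Algebra.Polynomial"
begin

interpretation RQ: vector_space "\<lambda>(q::rat) (x::real). of_rat q * x"
  by unfold_locales (auto simp: algebra_simps of_rat_add of_rat_mult)

primrec SS :: "real set \<Rightarrow> nat \<Rightarrow> real set" where
  "SS B 0 = {0}"
| "SS B (Suc n) = (\<lambda>(s,q,v). s + of_rat q * v) ` (SS B n \<times> (UNIV::rat set) \<times> B)"

lemma span_in_SS:
  assumes "finite t" "t \<subseteq> B"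
  shows "(\<Sum>a\<in>t. of_rat (r a) * a) \<in> SS B (card t)"
  using assms
proof (induction t rule: finite_induct)
  case empty then show ?case by simp
next
  case (insert x F)
  then have "(\<Sum>a\<in>F. of_rat (r a) * a) + of_rat (r x) * x \<in> SS B (Suc (card F))"
    by (auto intro!: image_eqI[where x="((\<Sum>a\<in>F. of_rat (r a) * a), r x, x)"])
  with insert show ?case by (simp add: add.commute)
qed

lemma SS_countable: "finite B \<Longrightarrow> countable (SS B n)"
  by (induction n) (auto intro!: countable_image countable_SIGMA simp: countable_finite)

lemma lepoll_iff_ordLeq: "(A \<lesssim> B) = ordLeq3 (card_of A) (card_of B)"
  unfolding lepoll_def by (rule card_of_ordLeq)

lemma sq_lepoll: "infinite (B::'a set) \<Longrightarrow> B \<times> B \<lesssim> B"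
  by (metis card_of_Times_same_infinite eqpoll_iff_card_of_ordIso eqpoll_imp_lepoll)

lemma rat_lepoll: "infinite (B::'a set) \<Longrightarrow> (UNIV::rat set) \<lesssim> B"
proof -
  assume "infinite B"
  then have "(UNIV::nat set) \<lesssim> B" by (simp add: infinite_le_lepoll)
  moreover have "(UNIV::rat set) \<lesssim> (UNIV::nat set)"
  proof -
    have "countable (UNIV::rat set)" by simp
    then obtain f :: "rat \<Rightarrow> nat" where "inj_on f UNIV" unfolding countable_def by blast
    then show ?thesis unfolding lepoll_def by blast
  qed
  ultimately show ?thesis using lepoll_trans by blast
qed

lemma SS_lepoll: "infinite B \<Longrightarrow> SS B n \<lesssim> B"
proof (induction n)
  case 0
  then obtain b where "b \<in> B" by (metis finite.emptyI all_not_in_conv)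
  then show ?case unfolding lepoll_def by (auto intro!: exI[of _ "\<lambda>_. b"])
next
  case (Suc n)
  have "SS B n \<times> (UNIV::rat set) \<times> B \<lesssim> B \<times> B \<times> B"
    by (intro times_lepoll_mono Suc rat_lepoll lepoll_refl)
  also have "B \<times> B \<times> B \<lesssim> B \<times> B"
    by (intro times_lepoll_mono sq_lepoll Suc lepoll_refl)
  also have "B \<times> B \<lesssim> B" by (intro sq_lepoll Suc)
  finally show ?case
    by (simp only: SS.simps) (meson image_lepoll lepoll_trans)
qed

lemma hamel: obtains B where "RQ.independent B" "B \<approx> (UNIV::real set)"
proof -
  obtain B where B: "RQ.independent B" "UNIV \<subseteq> RQ.span B"
    using RQ.basis_exists[of UNIV] by blast
  have cover: "UNIV \<subseteq> (\<Union>n. SS B n)"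
  proof
    fix x :: real
    assume "x \<in> UNIV"
    with B(2) obtain t r where "finite t" "t \<subseteq> B" "x = (\<Sum>a\<in>t. of_rat (r a) * a)"
      unfolding RQ.span_explicit by blast
    then show "x \<in> (\<Union>n. SS B n)" using span_in_SS by blast
  qed
  have inf: "infinite B"
  proof
    assume "finite B"
    then have "countable (\<Union>n. SS B n)" by (auto intro!: SS_countable)
    with cover have "countable (UNIV::real set)" using countable_subset by blast
    with uncountable_UNIV_real show False by blast
  qed
  have "ordLeq3 (card_of (\<Union>n. SS B n)) (card_of B)"
    apply (rule card_of_UNION_ordLeq_infinite[OF inf])
    using inf SS_lepoll lepoll_iff_ordLeq infinite_le_lepoll by blast+
  then have "(UNIV::real set) \<lesssim> B"
    using cover lepoll_iff_ordLeq subset_imp_lepoll lepoll_trans by blast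
  then have "B \<approx> (UNIV::real set)"
    by (simp add: lepoll_antisym subset_imp_lepoll)
  with B show ?thesis using that by blast
qed

lemma exp_indep:
  fixes S :: "'a set" and L c :: "'a \<Rightarrow> real"
  assumes fin: "finite S" and inj: "inj_on L S"
    and zero: "\<forall>x\<in>{0..1}. (\<Sum>e\<in>S. c e * exp (L e * x)) = 0"
    and e0: "e0 \<in> S"
  shows "c e0 = 0"
proof -
  define N where "N = card S"
  have Npos: "N > 0" using fin e0 N_def card_gt_0_iff by blast
  define w where "w e = exp (L e / real N)" for e
  have winj: "inj_on w S"
    using inj Npos unfolding w_def inj_on_def by auto
  define p where "p = (\<Prod>e\<in>S-{e0}. [:- w e, 1:])"
  have degp: "degree p \<le> N - 1"
  proof -
    have "degree p = (\<Sum>e\<in>S-{e0}. degree [:- w e, 1:])"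
      unfolding p_def by (rule degree_prod_sum_eq) simp
    also have "\<dots> = card (S - {e0})" by simp
    also have "\<dots> = N - 1" using fin e0 N_def by simp
    finally show ?thesis by simp
  qed
  have pw: "poly p (w e) = (if e = e0 then poly p (w e0) else 0)" if "e \<in> S" for e
    using that fin unfolding p_def by (auto simp: poly_prod)
  have pw0: "poly p (w e0) \<noteq> 0"
    using fin winj e0 unfolding p_def
    by (auto simp: poly_prod inj_on_def)
  have pts: "(\<Sum>e\<in>S. c e * w e ^ j) = 0" if "j \<le> degree p" for j
  proof -
    have "j < N" using that degp Npos by linarith
    then have x01: "real j / real N \<in> {0..1}" using Npos by auto
    have "(\<Sum>e\<in>S. c e * w e ^ j) = (\<Sum>e\<in>S. c e * exp (L e * (real j / real N)))"
    proof (rule sum.cong[OF refl])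
      fix e
      have "w e ^ j = exp (real j * (L e / real N))"
        unfolding w_def by (simp only: exp_of_nat_mult)
      then show "c e * w e ^ j = c e * exp (L e * (real j / real N))"
        by (simp add: field_simps)
    qed
    also have "\<dots> = 0" using zero x01 by blast
    finally show ?thesis .
  qed
  have "0 = (\<Sum>j\<le>degree p. coeff p j * (\<Sum>e\<in>S. c e * w e ^ j))"
    using pts by simp
  also have "\<dots> = (\<Sum>e\<in>S. c e * (\<Sum>j\<le>degree p. coeff p j * w e ^ j))"
    by (simp add: sum_distrib_left sum_distrib_right mult_ac sum.swap[of _ "{..degree p}"])
  also have "\<dots> = (\<Sum>e\<in>S. c e * poly p (w e))"
    by (simp add: poly_altdef mult_ac)
  also have "\<dots> = (\<Sum>e\<in>S. if e = e0 then c e0 * poly p (w e0) else 0)"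
    by (rule sum.cong[OF refl]) (simp add: pw)
  also have "\<dots> = c e0 * poly p (w e0)"
    using fin e0 by simp
  finally show ?thesis using pw0 by simp
qed

lemma z_algA: "(\<lambda>x. if x \<in> {0..1} then exp (t*x) else 0) \<in> algA"
proof -
  let ?f = "\<lambda>x::real. if x \<in> {0..1} then exp (t*x) else 0"
  have "continuous_on {0..1} ?f"
  proof -
    have "continuous_on {0..1} (\<lambda>x::real. exp (t*x))" by (intro continuous_intros)
    then show ?thesis by (rule continuous_on_cong[THEN iffD1, rotated 2]) auto
  qed
  moreover have "real_analytic_on ?f {0<..<1}"
    unfolding real_analytic_on_def
  proof (intro ballI)
    fix x :: real assume "x \<in> {0<..<1}"
    show "\<exists>r>0. \<exists>a. \<forall>y\<in>{0<..<1}. \<bar>y - x\<bar> < r \<longrightarrow>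
      (\<lambda>n. a n * (y - x) ^ n) sums ?f y"
    proof (intro exI[of _ "1::real"] conjI exI[of _ "\<lambda>n. exp (t*x) * t^n / fact n"] ballI impI)
      show "(1::real) > 0" by simp
      fix y :: real assume y: "y \<in> {0<..<1}"
      have "(\<lambda>n. (t*(y-x)) ^ n /\<^sub>R fact n) sums exp (t*(y-x))" by (rule exp_converges)
      then have "(\<lambda>n. exp (t*x) * ((t*(y-x)) ^ n /\<^sub>R fact n)) sums (exp (t*x) * exp (t*(y-x)))"
        by (rule sums_mult)
      moreover have "exp (t*x) * exp (t*(y-x)) = ?f y"
        using y by (simp add: exp_add[symmetric] algebra_simps)
      ultimately show "(\<lambda>n. exp (t*x) * t^n / fact n * (y - x) ^ n) sums ?f y"
        by (simp add: power_mult_distrib divide_inverse mult_ac)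
    qed
  qed
  ultimately show ?thesis unfolding algA_def by auto
qed

theorem mainTheorem8:
  shows "\<exists>Z. Z \<subseteq> algA \<and> Z \<approx> (UNIV :: real set) \<and>
    (\<forall>zs c. distinct zs \<and> set zs \<subseteq> Z \<and> is_poly_in (length zs) c \<and> c (\<lambda>_. 0) = 0 \<longrightarrow>
       ((\<forall>x\<in>{0..1}. poly_eval c zs x = 0) \<longleftrightarrow> (\<forall>e. c e = 0)))"
proof -
  obtain B where indB: "RQ.independent B" and cardB: "B \<approx> (UNIV::real set)"
    using hamel by blast
  define z where "z t = (\<lambda>x::real. if x \<in> {0..1} then exp (t*x) else 0)" for t
  have zinj: "inj z"
  proof (rule injI)
    fix s t assume "z s = z t"
    then have "z s 1 = z t 1" by simp
    then show "s = t" unfolding z_def by simp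
  qed
  define Z where "Z = z ` B"
  have "Z \<subseteq> algA" unfolding Z_def z_def using z_algA by blast
  moreover have "Z \<approx> (UNIV::real set)"
    unfolding Z_def using cardB zinj
    by (meson eqpoll_trans inj_on_image_eqpoll_self inj_on_subset subset_UNIV)
  moreover have "(\<forall>x\<in>{0..1}. poly_eval c zs x = 0) \<longleftrightarrow> (\<forall>e. c e = 0)"
    if zs: "distinct zs" "set zs \<subseteq> Z" and pc: "is_poly_in (length zs) c" for zs c
  proof
    assume "\<forall>e. c e = 0"
    then show "\<forall>x\<in>{0..1}. poly_eval c zs x = 0" by (simp add: poly_eval_def)
  next
    assume zero: "\<forall>x\<in>{0..1}. poly_eval c zs x = 0"
    define n where "n = length zs"
    define ts where "ts i = inv_into B z (zs ! i)" for i
    have ts: "ts i \<in> B \<and> z (ts i) = zs ! i" if "i < n" for i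
    proof -
      have "zs ! i \<in> z ` B" using zs that n_def Z_def nth_mem by blast
      then show ?thesis unfolding ts_def by (simp add: inv_into_into f_inv_into_f)
    qed
    have tsinj: "inj_on ts {..<n}"
    proof (rule inj_onI)
      fix i j assume "i \<in> {..<n}" "j \<in> {..<n}" "ts i = ts j"
      then have "zs ! i = zs ! j" using ts by (metis lessThan_iff)
      with zs(1) show "i = j" using \<open>i \<in> {..<n}\<close> \<open>j \<in> {..<n}\<close> n_def
        by (simp add: nth_eq_iff_index_eq)
    qed
    define S where "S = {e. c e \<noteq> 0}"
    have finS: "finite S" using pc unfolding is_poly_in_def S_def by blast
    define L where "L e = (\<Sum>i<n. real (e i) * ts i)" for e :: "nat \<Rightarrow> nat"
    have eval: "poly_eval c zs x = (\<Sum>e\<in>S. c e * exp (L e * x))" if x: "x \<in> {0..1}" for x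
      unfolding poly_eval_def S_def[symmetric] n_def[symmetric]
    proof (rule sum.cong[OF refl])
      fix e
      have "(\<Prod>i<n. (zs ! i) x ^ e i) = (\<Prod>i<n. exp (real (e i) * ts i * x))"
      proof (rule prod.cong[OF refl])
        fix i assume "i \<in> {..<n}"
        then have "zs ! i = z (ts i)" using ts by simp
        then have "(zs ! i) x = exp (ts i * x)" using x unfolding z_def by simp
        then show "(zs ! i) x ^ e i = exp (real (e i) * ts i * x)"
          by (simp add: exp_of_nat_mult[symmetric] mult_ac)
      qed
      also have "\<dots> = exp (L e * x)"
        unfolding L_def by (simp add: exp_sum sum_distrib_right)
      finally show "c e * (\<Prod>i<n. (zs ! i) x ^ e i) = c e * exp (L e * x)" by simp
    qed
    have Linj: "inj_on L S"
    proof (rule inj_onI)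
      fix e e' assume e: "e \<in> S" "e' \<in> S" "L e = L e'"
      define T where "T = ts ` {..<n}"
      have finT: "finite T" unfolding T_def by simp
      have indT: "RQ.independent T"
        using indB ts unfolding T_def by (intro RQ.independent_mono[OF indB]) auto
      define iv where "iv v = the_inv_into {..<n} ts v" for v
      define u where "u v = (of_int (int (e (iv v)) - int (e' (iv v))) :: rat)" for v
      have "(\<Sum>v\<in>T. of_rat (u v) * v) = (\<Sum>i<n. of_rat (u (ts i)) * ts i)"
        unfolding T_def by (rule sum.reindex[OF tsinj, unfolded comp_def])
      also have "\<dots> = (\<Sum>i<n. (real (e i) - real (e' i)) * ts i)"
      proof (rule sum.cong[OF refl])
        fix i assume "i \<in> {..<n}"
        then have "iv (ts i) = i" unfolding iv_def by (rule the_inv_into_f_f[OF tsinj])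
        then show "of_rat (u (ts i)) * ts i = (real (e i) - real (e' i)) * ts i"
          unfolding u_def by (simp add: of_rat_diff)
      qed
      also have "\<dots> = L e - L e'"
        unfolding L_def by (simp add: left_diff_distrib sum_subtractf)
      also have "\<dots> = 0" using e by simp
      finally have sum0: "(\<Sum>v\<in>T. of_rat (u v) * v) = 0" .
      have u0: "\<forall>v\<in>T. u v = 0"
        using indT finT sum0 RQ.dependent_finite[OF finT] by blast
      show "e = e'"
      proof
        fix i
        show "e i = e' i"
        proof (cases "i < n")
          case True
          then have "ts i \<in> T" unfolding T_def by simp
          with u0 have "u (ts i) = 0" by blast
          moreover have "iv (ts i) = i" unfolding iv_def
            using True by (intro the_inv_into_f_f[OF tsinj]) simp
          ultimately show ?thesis unfolding u_def by simp
        next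
          case False
          have c1: "c e \<noteq> 0" "c e' \<noteq> 0" using e(1,2) unfolding S_def by auto
          have "i \<ge> length zs" using False n_def by simp
          moreover have "\<forall>i\<ge>length zs. e i = 0" "\<forall>i\<ge>length zs. e' i = 0"
            using pc c1 unfolding is_poly_in_def by blast+
          ultimately show ?thesis by simp
        qed
      qed
    qed
    show "\<forall>e. c e = 0"
    proof (rule ccontr)
      assume "\<not> (\<forall>e. c e = 0)"
      then obtain e0 where e0: "c e0 \<noteq> 0" by blast
      then have "e0 \<in> S" unfolding S_def by simp
      have z2: "\<forall>x\<in>{0..1}. (\<Sum>e\<in>S. c e * exp (L e * x)) = 0"
        using zero eval by simp
      have "c e0 = 0"
        by (rule exp_indep[OF finS Linj z2 \<open>e0 \<in> S\<close>])
      with e0 show False by simp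
    qed
  qed
  ultimately show ?thesis by blast
qed

end
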